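(* Let $S$ be a Strassen preordered semiring. Then for nonzero $x, y \in S$, the following are equivalent: (1) $f(x) \geq f(y)$ for every monotone semiring homomorphism $f : S \to \mathbb{R}_+$. (2) For every $\varepsilon > 0$, there are $m, n \in \mathbb{N}_{>0}$ and nonzero $z \in S$ such that $m \leq \varepsilon n$ and $n\, z\, x + m\, z \geq n\, z\, y$. (3) For every $\varepsilon > 0$, there are $m, n \in \mathbb{N}_{>0}$ and nonzero $z \in S$ such that $\frac{m}{n} \leq 1 + \varepsilon$ and $m\, z\, x \geq n\, z\, y$. (4) For every $\varepsilon > 0$, there are $k, n \in \mathbb{N}_{>0}$ such that $k \leq \varepsilon n$ and $2^k x^n \geq y^n$. Moreover, if $f(x) > f(y)$ for every monotone semiring homomorphism $f : S \to \mathbb{R}_+$, then there are nonzero $z, w \in S$ with $zx + w \geq zy + w$.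
   Context: A semiring is a set with two commutative monoid structures, addition (neutral element $0$) and multiplication (neutral element $1$), with multiplication distributing over addition; a semiring homomorphism preserves $+$, $\cdot$, $0$ and $1$. A preordered semiring is a semiring $S$ with a preorder $\geq$ such that $x \geq y$ implies $x + z \geq y + z$ and $xz \geq yz$ for all $z \in S$. A semiring homomorphism between preordered semirings is monotone if it preserves the preorder; $\mathbb{R}_+$ carries its usual order. A preordered semiring $S$ with $1 \geq 0$ is Strassen preordered if the unique homomorphism $\mathbb{N} \to S$ is an order embedding (i.e. for $a,b\in\mathbb{N}$, $a \geq b$ in $S$ iff $a \geq b$ in $\mathbb{N}$), and for every nonzero $x \in S$ there is $\ell \in \mathbb{N}$ with $\ell x \geq 1$ and $\ell \geq x$. $\mathbb{N}_{>0}$ denotes the positive integers. *)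

theory Defs
  imports Main "HOL.Real"
begin

definition preordered_semiring :: "('a::comm_semiring_1 \<Rightarrow> 'a \<Rightarrow> bool) \<Rightarrow> bool" where
  "preordered_semiring ge \<longleftrightarrow>
     (\<forall>x. ge x x) \<and>
     (\<forall>x y z. ge x y \<longrightarrow> ge y z \<longrightarrow> ge x z) \<and>
     (\<forall>x y z. ge x y \<longrightarrow> ge (x + z) (y + z)) \<and>
     (\<forall>x y z. ge x y \<longrightarrow> ge (x * z) (y * z))"

definition strassen_preordered :: "('a::comm_semiring_1 \<Rightarrow> 'a \<Rightarrow> bool) \<Rightarrow> bool" where
  "strassen_preordered ge \<longleftrightarrow>
     preordered_semiring ge \<and>
     ge 1 0 \<and>
     (\<forall>a b :: nat. ge (of_nat a) (of_nat b) \<longleftrightarrow> a \<ge> b) \<and>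
     (\<forall>x. x \<noteq> 0 \<longrightarrow> (\<exists>l :: nat. ge (of_nat l * x) 1 \<and> ge (of_nat l) x))"

definition mono_hom_Rplus :: "('a::comm_semiring_1 \<Rightarrow> 'a \<Rightarrow> bool) \<Rightarrow> ('a \<Rightarrow> real) \<Rightarrow> bool" where
  "mono_hom_Rplus ge f \<longleftrightarrow>
     (\<forall>x. f x \<ge> 0) \<and>
     f 0 = 0 \<and> f 1 = 1 \<and>
     (\<forall>x y. f (x + y) = f x + f y) \<and>
     (\<forall>x y. f (x * y) = f x * f y) \<and>
     (\<forall>x y. ge x y \<longrightarrow> f x \<ge> f y)"

end

theory Submission
  imports Defs
begin


locale strassen =
  fixes ge :: "'a::comm_semiring_1 \<Rightarrow> 'a \<Rightarrow> bool"
  assumes S: "strassen_preordered ge"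
begin

lemma PS: "preordered_semiring ge" using S unfolding strassen_preordered_def by (elim conjE)
lemma ge_refl: "ge x x" using PS unfolding preordered_semiring_def by (elim conjE) (erule allE)
lemma ge_trans: "ge x y \<Longrightarrow> ge y z \<Longrightarrow> ge x z"
proof -
  have "\<forall>x y z. ge x y \<longrightarrow> ge y z \<longrightarrow> ge x z" using PS unfolding preordered_semiring_def by (elim conjE)
  then show "ge x y \<Longrightarrow> ge y z \<Longrightarrow> ge x z" by simp
qed
lemma ge_add: "ge x y \<Longrightarrow> ge (x + z) (y + z)"
proof -
  have "\<forall>x y z. ge x y \<longrightarrow> ge (x + z) (y + z)" using PS unfolding preordered_semiring_def by (elim conjE)
  then show "ge x y \<Longrightarrow> ge (x + z) (y + z)" by simp
qed
lemma ge_mult: "ge x y \<Longrightarrow> ge (x * z) (y * z)"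
proof -
  have "\<forall>x y z. ge x y \<longrightarrow> ge (x * z) (y * z)" using PS unfolding preordered_semiring_def by (elim conjE)
  then show "ge x y \<Longrightarrow> ge (x * z) (y * z)" by simp
qed
lemma ge_10: "ge 1 0" using S unfolding strassen_preordered_def by (elim conjE)
lemma ge_nat: "ge (of_nat a) (of_nat b) \<longleftrightarrow> b \<le> a"
proof -
  have "\<forall>a b :: nat. ge (of_nat a) (of_nat b) \<longleftrightarrow> a \<ge> b" using S unfolding strassen_preordered_def by (elim conjE)
  then show ?thesis by simp
qed
lemma ge_arch: "x \<noteq> 0 \<Longrightarrow> \<exists>l::nat. ge (of_nat l * x) 1 \<and> ge (of_nat l) x"
proof -
  have "\<forall>x. x \<noteq> 0 \<longrightarrow> (\<exists>l :: nat. ge (of_nat l * x) 1 \<and> ge (of_nat l) x)" using S unfolding strassen_preordered_def by (elim conjE)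
  then show "x \<noteq> 0 \<Longrightarrow> \<exists>l::nat. ge (of_nat l * x) 1 \<and> ge (of_nat l) x" by simp
qed

definition goodrel :: "('a \<times> 'a) set \<Rightarrow> bool" where
 "goodrel P \<longleftrightarrow> (\<forall>u v. ge u v \<longrightarrow> (u,v) \<in> P) \<and> (\<forall>u v w. (u,v)\<in>P \<longrightarrow> (v,w)\<in>P \<longrightarrow> (u,w)\<in>P)
   \<and> (\<forall>u v w. (u,v)\<in>P \<longrightarrow> (u+w,v+w)\<in>P) \<and> (\<forall>u v w. (u,v)\<in>P \<longrightarrow> (u*w,v*w)\<in>P)
   \<and> (\<forall>p q::nat. (of_nat p, of_nat q) \<in> P \<longrightarrow> q \<le> p)"

definition canc :: "('a \<times> 'a) set \<Rightarrow> bool" where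
 "canc P \<longleftrightarrow> (\<forall>t u v w. t \<noteq> 0 \<longrightarrow> (t*u+w, t*v+w) \<in> P \<longrightarrow> (u,v) \<in> P)"

definition gerel :: "('a \<times> 'a) set" where "gerel = {(u,v). ge u v}"

lemma goodrel_ge: "goodrel gerel"
  unfolding goodrel_def gerel_def using ge_trans ge_add ge_mult ge_nat by auto

context fixes P assumes G: "goodrel P" begin
lemma P_ge: "ge u v \<Longrightarrow> (u,v) \<in> P" using G unfolding goodrel_def by blast
lemma P_refl: "(u,u) \<in> P" using P_ge ge_refl by blast
lemma P_trans: "(u,v)\<in>P \<Longrightarrow> (v,w)\<in>P \<Longrightarrow> (u,w)\<in>P" using G unfolding goodrel_def by blast
lemma P_add: "(u,v)\<in>P \<Longrightarrow> (u+w,v+w)\<in>P" using G unfolding goodrel_def by blast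
lemma P_addL: "(u,v)\<in>P \<Longrightarrow> (w+u,w+v)\<in>P" using P_add[of u v w] by (simp add: add.commute)
lemma P_mult: "(u,v)\<in>P \<Longrightarrow> (u*w,v*w)\<in>P" using G unfolding goodrel_def by blast
lemma P_multL: "(u,v)\<in>P \<Longrightarrow> (w*u,w*v)\<in>P" using P_mult[of u v w] by (simp add: mult.commute)
lemma P_nat: "(of_nat p, of_nat q) \<in> P \<Longrightarrow> q \<le> p" using G unfolding goodrel_def by blast
lemma P_add2: "(a,b)\<in>P \<Longrightarrow> (c,d)\<in>P \<Longrightarrow> (a+c,b+d)\<in>P"
  by (meson P_add P_addL P_trans)
lemma P_mult2: "(a,b)\<in>P \<Longrightarrow> (c,d)\<in>P \<Longrightarrow> (a*c,b*d)\<in>P"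
  by (meson P_mult P_multL P_trans)
lemma P_zero: "(u, 0) \<in> P"
  using P_ge[OF ge_mult[OF ge_10, of u]] by simp
lemma P_le_add: "(u + v, u) \<in> P"
  using P_addL[OF P_zero, of u v] by simp
lemma P_natI: "q \<le> p \<Longrightarrow> (of_nat p, of_nat q) \<in> P"
  using P_ge ge_nat by blast
lemma P_bound: "\<exists>l::nat. (of_nat l, x) \<in> P"
proof (cases "x = 0")
  case True then show ?thesis using P_refl[of 0] by (intro exI[of _ 0]) simp
next
  case False then show ?thesis using ge_arch P_ge by blast
qed
lemma P_arch: "x \<noteq> 0 \<Longrightarrow> \<exists>l::nat. (of_nat l * x, 1) \<in> P"
  using ge_arch P_ge by blast

lemma no_absorb: assumes t: "t \<noteq> 0" shows "(w, t + w) \<notin> P"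
proof
  assume A: "(w, t + w) \<in> P"
  have it: "(w, of_nat k * t + w) \<in> P" for k
  proof (induction k)
    case 0 then show ?case by (simp add: P_refl)
  next
    case (Suc k)
    have "(t + w, t + (of_nat k * t + w)) \<in> P" using P_addL[OF Suc] .
    then have "(w, t + (of_nat k * t + w)) \<in> P" using A P_trans by blast
    then show ?case by (simp add: algebra_simps)
  qed
  obtain lw where lw: "(of_nat lw, w) \<in> P" using P_bound by blast
  obtain lt where lt: "(of_nat lt * t, 1) \<in> P" using P_arch[OF t] by blast
  define k where "k = lw * lt + 1"
  have "(of_nat lw, of_nat k * t) \<in> P"
    using P_trans[OF lw P_trans[OF it P_le_add]] by (simp add: add.commute)
  then have "(of_nat lw * of_nat lt, of_nat k * t * of_nat lt) \<in> P"
    by (rule P_mult)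
  then have "(of_nat lw * of_nat lt, of_nat k * (of_nat lt * t)) \<in> P"
    by (simp add: algebra_simps)
  moreover have "(of_nat k * (of_nat lt * t), of_nat k * 1) \<in> P" using P_multL[OF lt] .
  ultimately have "(of_nat (lw * lt), of_nat k) \<in> P" using P_trans by simp
  then have "k \<le> lw * lt" by (rule P_nat)
  then show False unfolding k_def by simp
qed
end

lemma nz_sum: "(a::'a) \<noteq> 0 \<Longrightarrow> a + b \<noteq> 0"
proof
  assume a: "a \<noteq> 0" and ab: "a + b = 0"
  obtain l where l: "ge (of_nat l * a) 1" using ge_arch[OF a] by blast
  have "ge (of_nat l * (a + b)) (of_nat l * a)"
    using P_le_add[OF goodrel_ge, of a b] P_multL[OF goodrel_ge] unfolding gerel_def by auto
  then have "ge 0 1" using ab l ge_trans by (metis mult_zero_right)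
  then show False using ge_nat[of 0 1] by simp
qed

lemma nz_mult: "(a::'a) \<noteq> 0 \<Longrightarrow> b \<noteq> 0 \<Longrightarrow> a * b \<noteq> 0"
proof
  assume a: "a \<noteq> 0" and b: "b \<noteq> 0" and ab: "a * b = 0"
  obtain l where l: "ge (of_nat l * a) 1" using ge_arch[OF a] by blast
  obtain l' where l': "ge (of_nat l' * b) 1" using ge_arch[OF b] by blast
  have "(of_nat l * a * (of_nat l' * b), 1 * 1) \<in> gerel"
    using P_mult2[OF goodrel_ge] l l' unfolding gerel_def by blast
  moreover have "of_nat l * a * (of_nat l' * b) = of_nat l * of_nat l' * (a*b)" by (simp add: algebra_simps)
  ultimately have "ge 0 1" using ab unfolding gerel_def by simp
  then show False using ge_nat[of 0 1] by simp
qed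

end


context strassen begin

definition ext :: "('a \<times> 'a) set \<Rightarrow> 'a \<Rightarrow> 'a \<Rightarrow> ('a \<times> 'a) set" where
  "ext P a b = {(u,v). \<exists>t s w. t \<noteq> 0 \<and> (t*u + s*a + w, t*v + s*b + w) \<in> P}"

lemma P_eq: "(a,b)\<in>P \<Longrightarrow> a = a' \<Longrightarrow> b = b' \<Longrightarrow> (a',b')\<in>P" by simp

lemma extI: "t \<noteq> 0 \<Longrightarrow> (t*u + s*a + w, t*v + s*b + w) \<in> P \<Longrightarrow> (u,v) \<in> ext P a b"
  unfolding ext_def by blast

lemma ext_sub: "P \<subseteq> ext P a b"
proof
  fix x assume x: "x \<in> P"
  obtain u v where uv: "x = (u,v)" by (cases x)
  have "(1*u + 0*a + 0, 1*v + 0*b + 0) \<in> P" using x uv by simp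
  then show "x \<in> ext P a b" unfolding uv by (rule extI[rotated]) simp
qed

lemma ext_ba: assumes "goodrel P" shows "(b,a) \<in> ext P a b"
proof -
  have "(1*b + 1*a + 0, 1*a + 1*b + 0) \<in> P" using P_refl[OF assms, of "b + a"] by (simp add: add.commute)
  then show ?thesis by (rule extI[rotated]) simp
qed

lemma ext_canc: "canc (ext P a b)"
  unfolding canc_def
proof (intro allI impI)
  fix t u v w assume t: "(t::'a) \<noteq> 0" and "(t * u + w, t * v + w) \<in> ext P a b"
  then obtain t' s w' where t': "t' \<noteq> 0" and
    E: "(t' * (t * u + w) + s * a + w', t' * (t * v + w) + s * b + w') \<in> P"
    unfolding ext_def by blast
  have "(t'*t) * u + s * a + (t'*w + w') = t' * (t * u + w) + s * a + w'"
       "(t'*t) * v + s * b + (t'*w + w') = t' * (t * v + w) + s * b + w'"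
    by (simp_all add: algebra_simps)
  then have "((t'*t) * u + s * a + (t'*w + w'), (t'*t) * v + s * b + (t'*w + w')) \<in> P"
    using E by simp
  moreover have "t' * t \<noteq> 0" using nz_mult t t' by blast
  ultimately show "(u, v) \<in> ext P a b" unfolding ext_def by blast
qed

lemma ext_good:
  assumes G: "goodrel P" and H: "\<And>s w. s \<noteq> 0 \<Longrightarrow> (s*a + w, s*b + w) \<notin> P"
  shows "goodrel (ext P a b)"
  unfolding goodrel_def
proof (intro conjI allI impI)
  fix u v assume "ge u v"
  then show "(u,v) \<in> ext P a b" using ext_sub[of P a b] P_ge[OF G] by blast
next
  fix u v x assume A: "(u, v) \<in> ext P a b" and B: "(v, x) \<in> ext P a b"
  obtain t1 s1 w1 where t1: "t1 \<noteq> 0" and E1: "(t1*u + s1*a + w1, t1*v + s1*b + w1) \<in> P"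
    using A unfolding ext_def by blast
  obtain t2 s2 w2 where t2: "t2 \<noteq> 0" and E2: "(t2*v + s2*a + w2, t2*x + s2*b + w2) \<in> P"
    using B unfolding ext_def by blast
  have F1: "((t1*u + s1*a + w1) * t2 + (t1*s2*a + t1*w2), (t1*v + s1*b + w1) * t2 + (t1*s2*a + t1*w2)) \<in> P"
    using P_add[OF G P_mult[OF G E1]] .
  have F2: "((t2*v + s2*a + w2) * t1 + (t2*s1*b + t2*w1), (t2*x + s2*b + w2) * t1 + (t2*s1*b + t2*w1)) \<in> P"
    using P_add[OF G P_mult[OF G E2]] .
  have eq: "(t1*v + s1*b + w1) * t2 + (t1*s2*a + t1*w2) = (t2*v + s2*a + w2) * t1 + (t2*s1*b + t2*w1)"
    by (simp add: algebra_simps)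
  have "((t1*u + s1*a + w1) * t2 + (t1*s2*a + t1*w2), (t2*x + s2*b + w2) * t1 + (t2*s1*b + t2*w1)) \<in> P"
    using P_trans[OF G F1] F2 eq by simp
  moreover have "(t1*u + s1*a + w1) * t2 + (t1*s2*a + t1*w2) = (t1*t2)*u + (t2*s1 + t1*s2)*a + (t2*w1+t1*w2)"
    "(t2*x + s2*b + w2) * t1 + (t2*s1*b + t2*w1) = (t1*t2)*x + (t2*s1 + t1*s2)*b + (t2*w1+t1*w2)"
    by (simp_all add: algebra_simps)
  ultimately have "((t1*t2)*u + (t2*s1 + t1*s2)*a + (t2*w1+t1*w2), (t1*t2)*x + (t2*s1 + t1*s2)*b + (t2*w1+t1*w2)) \<in> P"
    by simp
  moreover have "t1 * t2 \<noteq> 0" using nz_mult t1 t2 by blast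
  ultimately show "(u, x) \<in> ext P a b" by (intro extI)
next
  fix u v c assume "(u, v) \<in> ext P a b"
  then obtain t s w where t: "t \<noteq> 0" and E: "(t*u + s*a + w, t*v + s*b + w) \<in> P"
    unfolding ext_def by blast
  have "((t*u + s*a + w) + t*c, (t*v + s*b + w) + t*c) \<in> P" using P_add[OF G E] .
  moreover have "(t*u + s*a + w) + t*c = t*(u+c) + s*a + w" "(t*v + s*b + w) + t*c = t*(v+c) + s*b + w"
    by (simp_all add: algebra_simps)
  ultimately have "(t*(u+c) + s*a + w, t*(v+c) + s*b + w) \<in> P" by simp
  then show "(u + c, v + c) \<in> ext P a b" using t by (intro extI)
next
  fix u v c assume "(u, v) \<in> ext P a b"
  then obtain t s w where t: "t \<noteq> 0" and E: "(t*u + s*a + w, t*v + s*b + w) \<in> P"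
    unfolding ext_def by blast
  have "((t*u + s*a + w) * c, (t*v + s*b + w) * c) \<in> P" using P_mult[OF G E] .
  moreover have "(t*u + s*a + w) * c = t*(u*c) + (s*c)*a + w*c" "(t*v + s*b + w) * c = t*(v*c) + (s*c)*b + w*c"
    by (simp_all add: algebra_simps)
  ultimately have "(t*(u*c) + (s*c)*a + w*c, t*(v*c) + (s*c)*b + w*c) \<in> P" by simp
  then show "(u * c, v * c) \<in> ext P a b" using t by (intro extI)
next
  fix p q :: nat assume "(of_nat p, of_nat q) \<in> ext P a b"
  then obtain t s w where t: "t \<noteq> 0" and E: "(t*of_nat p + s*a + w, t*of_nat q + s*b + w) \<in> P"
    unfolding ext_def by blast
  show "q \<le> p"
  proof (rule ccontr)
    assume "\<not> q \<le> p"
    then have N: "(of_nat q, of_nat (Suc p)) \<in> P" by (intro P_natI[OF G]) simp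
    have N2: "(of_nat q * t + (s*b + w), of_nat (Suc p) * t + (s*b + w)) \<in> P"
      using P_add[OF G P_mult[OF G N]] .
    have E1: "(t*of_nat p + s*a + w, of_nat q * t + (s*b + w)) \<in> P"
      by (rule P_eq[OF E]) (simp_all add: algebra_simps)
    have E3: "(t*of_nat p + s*a + w, of_nat (Suc p) * t + (s*b + w)) \<in> P"
      using P_trans[OF G E1 N2] .
    have E2: "(s*a + (w + t * of_nat p), t + (s*b + (w + t * of_nat p))) \<in> P"
      by (rule P_eq[OF E3]) (simp_all add: algebra_simps)
    show False
    proof (cases "s = 0")
      case True
      then show False using E2 no_absorb[OF G t] by simp
    next
      case False
      have "(t + (s*b + (w + t * of_nat p)), s*b + (w + t * of_nat p)) \<in> P"
        using P_le_add[OF G, of "s*b + (w + t * of_nat p)" t] by (simp add: add.commute)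
      then have "(s*a + (w + t * of_nat p), s*b + (w + t * of_nat p)) \<in> P"
        using P_trans[OF G E2] by blast
      then show False using H[OF False] by blast
    qed
  qed
qed

lemma canc_H: "canc P \<Longrightarrow> (a,b) \<notin> P \<Longrightarrow> s \<noteq> 0 \<Longrightarrow> (s*a + w, s*b + w) \<notin> P"
  unfolding canc_def by blast

definition total :: "('a \<times> 'a) set \<Rightarrow> bool" where
  "total P \<longleftrightarrow> (\<forall>a b. (a,b) \<in> P \<or> (b,a) \<in> P)"

lemma chain_union:
  assumes C: "C \<in> chains {P. goodrel P \<and> canc P \<and> R \<subseteq> P}" and ne: "C \<noteq> {}"
  shows "goodrel (\<Union>C) \<and> canc (\<Union>C) \<and> R \<subseteq> \<Union>C"
proof -
  have CA: "\<And>P. P \<in> C \<Longrightarrow> goodrel P \<and> canc P \<and> R \<subseteq> P" using chainsD2[OF C] by blast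
  obtain P0 where P0: "P0 \<in> C" using ne by blast
  have "goodrel (\<Union>C)" unfolding goodrel_def
  proof (intro conjI allI impI)
    fix u v assume "ge u v" then show "(u,v) \<in> \<Union>C" using P0 CA P_ge by blast
  next
    fix u v w assume "(u,v) \<in> \<Union>C" "(v,w) \<in> \<Union>C"
    then obtain P1 P2 where "P1 \<in> C" "P2 \<in> C" "(u,v) \<in> P1" "(v,w) \<in> P2" by blast
    then have "(u,v) \<in> P1 \<and> (v,w) \<in> P1 \<and> P1 \<in> C \<or> (u,v) \<in> P2 \<and> (v,w) \<in> P2 \<and> P2 \<in> C"
      using chainsD[OF C] by blast
    then show "(u,w) \<in> \<Union>C" using CA P_trans by blast
  next
    fix u v w assume "(u,v) \<in> \<Union>C"
    then obtain P1 where "P1 \<in> C" "(u,v) \<in> P1" by blast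
    then show "(u+w,v+w) \<in> \<Union>C" using CA P_add by blast
  next
    fix u v w assume "(u,v) \<in> \<Union>C"
    then obtain P1 where "P1 \<in> C" "(u,v) \<in> P1" by blast
    then show "(u*w,v*w) \<in> \<Union>C" using CA P_mult by blast
  next
    fix p q :: nat assume "(of_nat p, of_nat q) \<in> \<Union>C"
    then obtain P1 where "P1 \<in> C" "(of_nat p, of_nat q) \<in> P1" by blast
    then show "q \<le> p" using CA P_nat by blast
  qed
  moreover have "canc (\<Union>C)" unfolding canc_def
  proof (intro allI impI)
    fix t u v w assume "(t::'a) \<noteq> 0" "(t * u + w, t * v + w) \<in> \<Union>C"
    then obtain P1 where "P1 \<in> C" "(t * u + w, t * v + w) \<in> P1" by blast
    then show "(u, v) \<in> \<Union>C" using CA \<open>t \<noteq> 0\<close> unfolding canc_def by blast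
  qed
  moreover have "R \<subseteq> \<Union>C" using P0 CA by blast
  ultimately show ?thesis by blast
qed

lemma maximal_total:
  assumes R: "goodrel R" "canc R"
  shows "\<exists>M. goodrel M \<and> total M \<and> R \<subseteq> M"
proof -
  let ?A = "{P. goodrel P \<and> canc P \<and> R \<subseteq> P}"
  have RA: "R \<in> ?A" using R by simp
  have "\<forall>C\<in>chains ?A. \<exists>U\<in>?A. \<forall>X\<in>C. X \<subseteq> U"
  proof
    fix C assume C: "C \<in> chains ?A"
    show "\<exists>U\<in>?A. \<forall>X\<in>C. X \<subseteq> U"
    proof (cases "C = {}")
      case True
      have "\<forall>X\<in>C. X \<subseteq> R" using True by simp
      then show ?thesis using RA by (rule bexI)
    next
      case False
      then have U: "\<Union>C \<in> ?A" using chain_union[OF C] by simp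
      have "\<forall>X\<in>C. X \<subseteq> \<Union>C" by (simp add: Union_upper)
      then show ?thesis using U by (rule bexI)
    qed
  qed
  from Zorn_Lemma2[OF this] obtain M where M: "M \<in> ?A" and mx: "\<forall>X\<in>?A. M \<subseteq> X \<longrightarrow> X = M"
    by (elim bexE)
  have G: "goodrel M" "canc M" "R \<subseteq> M" using M by simp_all
  have "total M" unfolding total_def
  proof (intro allI)
    fix a b
    show "(a, b) \<in> M \<or> (b, a) \<in> M"
    proof (cases "(a,b) \<in> M")
      case False
      have H: "\<And>s w. s \<noteq> 0 \<Longrightarrow> (s*a + w, s*b + w) \<notin> M"
        using canc_H[OF G(2) False] .
      have "goodrel (ext M a b)" using ext_good[OF G(1) H] .
      moreover have "R \<subseteq> ext M a b" using G(3) ext_sub[of M a b] by (rule subset_trans)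
      ultimately have "ext M a b \<in> ?A" using ext_canc by simp
      then have "ext M a b = M" using mx ext_sub[of M a b] by simp
      then show ?thesis using ext_ba[OF G(1), of b a] by simp
    qed simp
  qed
  then show ?thesis using G by blast
qed

end



lemma small_pos: fixes d C :: real assumes H: "\<And>n::nat. n > 0 \<Longrightarrow> real n * d \<le> C" shows "d \<le> 0"
proof (rule ccontr)
  assume "\<not> d \<le> 0" then have d: "d > 0" by simp
  obtain n :: nat where n: "C / d < real n" using reals_Archimedean2 by blast
  have "C < real (Suc n) * d" using n d by (simp add: field_simps)
  then show False using H[of "Suc n"] by simp
qed

lemma small_abs: fixes d C :: real assumes H: "\<And>n::nat. n > 0 \<Longrightarrow> real n * \<bar>d\<bar> \<le> C" shows "d = 0"
proof -
  have "real n * d \<le> C" if "n > 0" for n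
  proof -
    have "real n * d \<le> real n * \<bar>d\<bar>" by (rule mult_left_mono) simp_all
    then show ?thesis using H[OF that] by linarith
  qed
  then have "d \<le> 0" by (rule small_pos)
  moreover have "real n * (- d) \<le> C" if "n > 0" for n
  proof -
    have "real n * (- d) \<le> real n * \<bar>d\<bar>" by (rule mult_left_mono) simp_all
    then show ?thesis using H[OF that] by linarith
  qed
  then have "- d \<le> 0" by (rule small_pos)
  ultimately show ?thesis by simp
qed

context strassen begin

definition hset :: "('a \<times> 'a) set \<Rightarrow> 'a \<Rightarrow> real set" where
  "hset P a = {real m / real n | m n. n > 0 \<and> (of_nat n * a, of_nat m) \<in> P}"

definition hf :: "('a \<times> 'a) set \<Rightarrow> 'a \<Rightarrow> real" where
  "hf P a = Sup (hset P a)"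

context fixes P assumes G: "goodrel P" and T: "total P" begin

lemma hset_ne: "0 \<in> hset P a"
proof -
  have "(of_nat 1 * a, of_nat 0) \<in> P" using P_zero[OF G] by simp
  then show ?thesis unfolding hset_def by force
qed

lemma hset_bdd: "bdd_above (hset P a)"
proof -
  obtain l where l: "(of_nat l, a) \<in> P" using P_bound[OF G] by blast
  have "x \<le> real l" if xin: "x \<in> hset P a" for x
  proof -
    obtain m n where x: "x = real m / real n" and n: "n > 0" and E: "(of_nat n * a, of_nat m) \<in> P"
      using xin unfolding hset_def by blast
    have "(of_nat n * of_nat l, of_nat n * a) \<in> P" using P_multL[OF G l] .
    then have "(of_nat (n * l), of_nat m) \<in> P" using P_trans[OF G _ E] by simp
    then have "m \<le> n * l" by (rule P_nat[OF G])
    then have "real m \<le> real n * real l" by (metis of_nat_le_iff of_nat_mult)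
    then have "real m / real n \<le> (real n * real l) / real n" by (rule divide_right_mono) simp
    then show ?thesis using x n by simp
  qed
  then show ?thesis by (rule bdd_aboveI)
qed

lemma hf_lower: assumes n: "n > 0" and E: "(of_nat n * a, of_nat m) \<in> P"
  shows "real m \<le> real n * hf P a"
proof -
  have "real m / real n \<in> hset P a" unfolding hset_def using n E by blast
  then have "real m / real n \<le> hf P a" unfolding hf_def using hset_bdd by (rule cSup_upper)
  then show ?thesis using n by (simp add: field_simps)
qed

lemma hf_upper: assumes n: "n > 0" and E: "(of_nat m, of_nat n * a) \<in> P"
  shows "real n * hf P a \<le> real m"
proof -
  have "hf P a \<le> real m / real n" unfolding hf_def
  proof (rule cSup_least)
    show "hset P a \<noteq> {}" using hset_ne by blast
  next
    fix x assume "x \<in> hset P a"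
    then obtain m' n' where x: "x = real m' / real n'" and n': "n' > 0" and E': "(of_nat n' * a, of_nat m') \<in> P"
      unfolding hset_def by blast
    have A: "(of_nat n * (of_nat n' * a), of_nat n * of_nat m') \<in> P" using P_multL[OF G E'] .
    have B: "(of_nat n' * of_nat m, of_nat n' * (of_nat n * a)) \<in> P" using P_multL[OF G E] .
    have "of_nat n' * (of_nat n * a) = of_nat n * (of_nat n' * a)" by (simp add: algebra_simps)
    then have "(of_nat n' * of_nat m, of_nat n * of_nat m') \<in> P" using P_trans[OF G B] A by simp
    then have "(of_nat (n' * m), of_nat (n * m')) \<in> P" by simp
    then have "n * m' \<le> n' * m" by (rule P_nat[OF G])
    then have "real n * real m' \<le> real n' * real m" by (metis of_nat_le_iff of_nat_mult)
    then have ineq: "real m' * real n \<le> real m * real n'" by (simp add: mult.commute)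
    have "real m' / real n' = (real m' * real n) / (real n' * real n)" using n by simp
    also have "\<dots> \<le> (real m * real n') / (real n' * real n)" by (rule divide_right_mono) (use ineq in auto)
    also have "\<dots> = real m / real n" using n' by simp
    finally show "x \<le> real m / real n" using x by simp
  qed
  then show ?thesis using n by (simp add: field_simps)
qed

lemma approx: assumes n: "n > 0"
  shows "\<exists>m. (of_nat n * a, of_nat m) \<in> P \<and> (of_nat (Suc m), of_nat n * a) \<in> P"
proof -
  obtain l where l: "(of_nat l, a) \<in> P" using P_bound[OF G] by blast
  have bd: "\<forall>y. (of_nat n * a, of_nat y) \<in> P \<longrightarrow> id y < Suc (n * l)"
  proof (intro allI impI)
    fix y assume E: "(of_nat n * a, of_nat y) \<in> P"
    have "(of_nat n * of_nat l, of_nat n * a) \<in> P" using P_multL[OF G l] .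
    then have "(of_nat (n * l), of_nat y) \<in> P" using P_trans[OF G _ E] by simp
    then have "y \<le> n * l" by (rule P_nat[OF G])
    then show "id y < Suc (n * l)" by simp
  qed
  have z: "(of_nat n * a, of_nat 0) \<in> P" using P_zero[OF G] by simp
  obtain m where m: "(of_nat n * a, of_nat m) \<in> P" and mx: "\<forall>y. (of_nat n * a, of_nat y) \<in> P \<longrightarrow> id y \<le> id m"
    using ex_has_greatest_nat[of "\<lambda>y. (of_nat n * a, of_nat y) \<in> P", OF z bd] by blast
  have "(of_nat (Suc m), of_nat n * a) \<in> P"
  proof (rule ccontr)
    assume "(of_nat (Suc m), of_nat n * a) \<notin> P"
    then have "(of_nat n * a, of_nat (Suc m)) \<in> P" using T unfolding total_def by blast
    then show False using mx by fastforce
  qed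
  then show ?thesis using m by blast
qed

lemma approx2: assumes n: "n > 0"
  shows "\<exists>m. (of_nat n * a, of_nat m) \<in> P \<and> (of_nat (Suc m), of_nat n * a) \<in> P \<and>
     real m \<le> real n * hf P a \<and> real n * hf P a \<le> real m + 1"
proof -
  obtain m where m: "(of_nat n * a, of_nat m) \<in> P" "(of_nat (Suc m), of_nat n * a) \<in> P"
    using approx[OF n] by blast
  show ?thesis using m hf_lower[OF n m(1)] hf_upper[OF n m(2)] by auto
qed

lemma hf_mono: assumes uv: "(u,v) \<in> P" shows "hf P v \<le> hf P u"
proof -
  have "real n * (hf P v - hf P u) \<le> 1" if n: "n > 0" for n
  proof -
    obtain m where m: "(of_nat n * v, of_nat m) \<in> P" "real n * hf P v \<le> real m + 1"
      using approx2[OF n, of v] by blast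
    have "(of_nat n * u, of_nat n * v) \<in> P" using P_multL[OF G uv] .
    then have "(of_nat n * u, of_nat m) \<in> P" using P_trans[OF G _ m(1)] by blast
    then have "real m \<le> real n * hf P u" by (rule hf_lower[OF n])
    then show ?thesis using m(2) by (simp add: right_diff_distrib)
  qed
  then have "hf P v - hf P u \<le> 0" by (rule small_pos)
  then show ?thesis by simp
qed

lemma hf_nonneg: "hf P a \<ge> 0"
  using hf_lower[of 1 a 0] P_zero[OF G] by simp

lemma hf_0: "hf P 0 = 0"
  using hf_upper[of 1 0 0] hf_nonneg[of 0] P_refl[OF G, of 0] by simp

lemma hf_1: "hf P 1 = 1"
  using hf_upper[of 1 1 1] hf_lower[of 1 1 1] P_refl[OF G, of 1] by simp

lemma hf_add: "hf P (a + b) = hf P a + hf P b"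
proof -
  have "real n * \<bar>hf P (a + b) - (hf P a + hf P b)\<bar> \<le> 2" if n: "n > 0" for n
  proof -
    obtain ma where ma: "(of_nat n * a, of_nat ma) \<in> P" "(of_nat (Suc ma), of_nat n * a) \<in> P"
      "real ma \<le> real n * hf P a" "real n * hf P a \<le> real ma + 1"
      using approx2[OF n, of a] by blast
    obtain mb where mb: "(of_nat n * b, of_nat mb) \<in> P" "(of_nat (Suc mb), of_nat n * b) \<in> P"
      "real mb \<le> real n * hf P b" "real n * hf P b \<le> real mb + 1"
      using approx2[OF n, of b] by blast
    have "(of_nat n * a + of_nat n * b, of_nat ma + of_nat mb) \<in> P" using P_add2[OF G ma(1) mb(1)] .
    then have "(of_nat n * (a + b), of_nat (ma + mb)) \<in> P" by (simp add: algebra_simps)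
    then have L: "real (ma + mb) \<le> real n * hf P (a + b)" by (rule hf_lower[OF n])
    have "(of_nat (Suc ma) + of_nat (Suc mb), of_nat n * a + of_nat n * b) \<in> P" using P_add2[OF G ma(2) mb(2)] .
    then have "(of_nat (Suc ma + Suc mb), of_nat n * (a + b)) \<in> P" by (simp add: algebra_simps)
    then have U: "real n * hf P (a + b) \<le> real (Suc ma + Suc mb)" by (rule hf_upper[OF n])
    have e1: "real n * \<bar>hf P (a + b) - (hf P a + hf P b)\<bar> = \<bar>real n * (hf P (a + b) - (hf P a + hf P b))\<bar>"
      by (simp add: abs_mult)
    have e2: "real n * (hf P (a + b) - (hf P a + hf P b)) = real n * hf P (a + b) - (real n * hf P a + real n * hf P b)"
      by (simp add: algebra_simps)
    have "real n * \<bar>hf P (a + b) - (hf P a + hf P b)\<bar> = \<bar>real n * hf P (a + b) - (real n * hf P a + real n * hf P b)\<bar>"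
      using e1 e2 by simp
    also have "\<dots> \<le> 2" using L U ma(3,4) mb(3,4) unfolding abs_le_iff by simp
    finally show ?thesis .
  qed
  then have "hf P (a + b) - (hf P a + hf P b) = 0" by (rule small_abs)
  then show ?thesis by simp
qed

lemma hf_mult: "hf P (a * b) = hf P a * hf P b"
proof -
  have "real n * \<bar>hf P (a * b) - hf P a * hf P b\<bar> \<le> hf P a + hf P b + 1" if n: "n > 0" for n
  proof -
    obtain ma where ma: "(of_nat n * a, of_nat ma) \<in> P" "(of_nat (Suc ma), of_nat n * a) \<in> P"
      "real ma \<le> real n * hf P a" "real n * hf P a \<le> real ma + 1"
      using approx2[OF n, of a] by blast
    obtain mb where mb: "(of_nat n * b, of_nat mb) \<in> P" "(of_nat (Suc mb), of_nat n * b) \<in> P"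
      "real mb \<le> real n * hf P b" "real n * hf P b \<le> real mb + 1"
      using approx2[OF n, of b] by blast
    have nn: "n * n > 0" using n by simp
    have "(of_nat n * a * (of_nat n * b), of_nat ma * of_nat mb) \<in> P" using P_mult2[OF G ma(1) mb(1)] .
    then have "(of_nat (n * n) * (a * b), of_nat (ma * mb)) \<in> P" by (simp add: algebra_simps)
    then have L: "real (ma * mb) \<le> real (n * n) * hf P (a * b)" by (rule hf_lower[OF nn])
    have "(of_nat (Suc ma) * of_nat (Suc mb), of_nat n * a * (of_nat n * b)) \<in> P" using P_mult2[OF G ma(2) mb(2)] .
    then have "(of_nat (Suc ma * Suc mb), of_nat (n * n) * (a * b)) \<in> P" by (simp add: algebra_simps)
    then have U: "real (n * n) * hf P (a * b) \<le> real (Suc ma * Suc mb)" by (rule hf_upper[OF nn])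
    define X where "X = real n * hf P a"
    define Y where "Y = real n * hf P b"
    define Z where "Z = real (n * n) * hf P (a * b)"
    have X: "real ma \<le> X" "X \<le> real ma + 1" using ma X_def by auto
    have Y: "real mb \<le> Y" "Y \<le> real mb + 1" using mb Y_def by auto
    have Z: "real ma * real mb \<le> Z" "Z \<le> real ma * real mb + real ma + real mb + 1" using L U Z_def by (auto simp: algebra_simps)
    have X0: "0 \<le> X" using X(1) by (rule order_trans[rotated]) simp
    have Y0: "0 \<le> Y" using Y(1) by (rule order_trans[rotated]) simp
    have XY1: "real ma * real mb \<le> X * Y" by (rule mult_mono[OF X(1) Y(1) X0]) simp
    have XY2: "X * Y \<le> (real ma + 1) * (real mb + 1)" by (rule mult_mono[OF X(2) Y(2) _ Y0]) simp
    have pe: "(real ma + 1) * (real mb + 1) = real ma * real mb + real ma + real mb + 1"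
      by (simp add: algebra_simps)
    have D: "\<bar>Z - X * Y\<bar> \<le> X + Y + 1"
      using XY1 XY2 Z X Y unfolding abs_le_iff pe by linarith
    have e1: "Z - X * Y = (real n * real n) * (hf P (a * b) - hf P a * hf P b)"
      unfolding X_def Y_def Z_def by (simp add: algebra_simps)
    have eq: "\<bar>Z - X * Y\<bar> = real n * (real n * \<bar>hf P (a * b) - hf P a * hf P b\<bar>)"
      unfolding e1 by (simp add: abs_mult)
    have "X + Y + 1 \<le> real n * (hf P a + hf P b + 1)"
      unfolding X_def Y_def using n by (simp add: algebra_simps)
    then have "real n * (real n * \<bar>hf P (a * b) - hf P a * hf P b\<bar>) \<le> real n * (hf P a + hf P b + 1)"
      using D eq by simp
    then show ?thesis using n by (simp add: mult_le_cancel_left_pos)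
  qed
  then have "hf P (a * b) - hf P a * hf P b = 0" by (rule small_abs)
  then show ?thesis by simp
qed

lemma hf_hom: "mono_hom_Rplus ge (hf P)"
  unfolding mono_hom_Rplus_def
proof (intro conjI allI impI)
  fix u v assume "ge u v" then show "hf P v \<le> hf P u" using hf_mono P_ge[OF G] by blast
qed (simp_all add: hf_nonneg hf_0 hf_1 hf_add hf_mult)

end

lemma total_hom: assumes "goodrel P" "total P"
  shows "\<exists>f. mono_hom_Rplus ge f \<and> (\<forall>u v. (u,v) \<in> P \<longrightarrow> f v \<le> f u)"
  using hf_hom[OF assms] hf_mono[OF assms] by blast

end


context strassen begin

lemma gerel_iff: "(u,v) \<in> gerel \<longleftrightarrow> ge u v" unfolding gerel_def by simp

lemma core:
  assumes H: "\<forall>f. mono_hom_Rplus ge f \<longrightarrow> f Y < f X"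
  shows "\<exists>z w. z \<noteq> 0 \<and> w \<noteq> 0 \<and> ge (z*X + w) (z*Y + w)"
proof (rule ccontr)
  assume N: "\<not> (\<exists>z w. z \<noteq> 0 \<and> w \<noteq> 0 \<and> ge (z*X + w) (z*Y + w))"
  have H2: "(s*X + w, s*Y + w) \<notin> gerel" if s: "s \<noteq> 0" for s w
  proof
    assume "(s*X + w, s*Y + w) \<in> gerel"
    then have "ge (s*X + w + 1) (s*Y + w + 1)" using ge_add unfolding gerel_iff by blast
    then have "ge (s*X + (w + 1)) (s*Y + (w + 1))" by (simp add: add.assoc)
    moreover have "w + 1 \<noteq> 0" using nz_sum[of 1 w] by (simp add: add.commute)
    ultimately show False using N s by blast
  qed
  let ?R = "ext gerel X Y"
  have GR: "goodrel ?R" using ext_good[OF goodrel_ge H2] .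
  obtain M where M: "goodrel M" "total M" "?R \<subseteq> M" using maximal_total[OF GR ext_canc] by blast
  obtain f where f: "mono_hom_Rplus ge f" "\<forall>u v. (u,v) \<in> M \<longrightarrow> f v \<le> f u"
    using total_hom[OF M(1,2)] by blast
  have "(Y, X) \<in> M" using ext_ba[OF goodrel_ge, of Y X] M(3) by blast
  then have "f X \<le> f Y" using f(2) by blast
  moreover have "f Y < f X" using H f(1) by blast
  ultimately show False by simp
qed

lemma ge_le_add: "ge (u + v) u" using P_le_add[OF goodrel_ge] gerel_iff by blast
lemma ge_addL: "ge u v \<Longrightarrow> ge (w + u) (w + v)" using P_addL[OF goodrel_ge] gerel_iff by blast
lemma ge_multL: "ge u v \<Longrightarrow> ge (w * u) (w * v)" using P_multL[OF goodrel_ge] gerel_iff by blast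
lemma ge_bound: "\<exists>l::nat. ge (of_nat l) x" using P_bound[OF goodrel_ge] gerel_iff by blast
lemma ge_eq: "ge a b \<Longrightarrow> a = a' \<Longrightarrow> b = b' \<Longrightarrow> ge a' b'" by simp

lemma decat:
  assumes z: "z \<noteq> 0" and E: "ge (z*A + w) (z*B + w)"
  shows "\<exists>L::nat. \<forall>k::nat. ge (of_nat k * z * A + of_nat L * z) (of_nat k * z * B)"
proof -
  have it: "ge (of_nat k * (z*A) + w) (of_nat k * (z*B) + w)" for k
  proof (induction k)
    case 0 then show ?case by (simp add: ge_refl)
  next
    case (Suc k)
    have a: "ge (z*A + (of_nat k * (z*A) + w)) (z*A + (of_nat k * (z*B) + w))" using ge_addL[OF Suc] .
    have b: "ge ((z*A + w) + of_nat k * (z*B)) ((z*B + w) + of_nat k * (z*B))" using ge_add[OF E] .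
    have "ge (z*A + (of_nat k * (z*A) + w)) ((z*B + w) + of_nat k * (z*B))"
      using ge_trans[OF a] b by (simp add: algebra_simps)
    then show ?case by (simp add: algebra_simps)
  qed
  obtain lw where lw: "ge (of_nat lw) w" using ge_bound by blast
  obtain lz where lz: "ge (of_nat lz * z) 1" using ge_arch[OF z] by blast
  have "ge (of_nat lw * (of_nat lz * z)) (of_nat lw * 1)" using ge_multL[OF lz] .
  then have wL: "ge (of_nat (lw * lz) * z) w" using ge_trans[OF _ lw] by (simp add: algebra_simps)
  have "ge (of_nat k * z * A + of_nat (lw*lz) * z) (of_nat k * z * B)" for k
  proof -
    have a: "ge (of_nat k * (z*A) + of_nat (lw*lz) * z) (of_nat k * (z*A) + w)" using ge_addL[OF wL] .
    have b: "ge (of_nat k * (z*B) + w) (of_nat k * (z*B))" using ge_le_add .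
    have "ge (of_nat k * (z*A) + of_nat (lw*lz) * z) (of_nat k * (z*B))"
      using ge_trans[OF ge_trans[OF a it] b] .
    then show ?thesis by (simp add: algebra_simps)
  qed
  then show ?thesis by blast
qed

context fixes f assumes F: "mono_hom_Rplus ge f" begin
lemma f_add: "f (a + b) = f a + f b" using F unfolding mono_hom_Rplus_def by blast
lemma f_mult: "f (a * b) = f a * f b" using F unfolding mono_hom_Rplus_def by blast
lemma f_0: "f 0 = 0" using F unfolding mono_hom_Rplus_def by blast
lemma f_1: "f 1 = 1" using F unfolding mono_hom_Rplus_def by blast
lemma f_nonneg: "f a \<ge> 0" using F unfolding mono_hom_Rplus_def by blast
lemma f_mono: "ge a b \<Longrightarrow> f a \<ge> f b" using F unfolding mono_hom_Rplus_def by blast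
lemma f_nat: "f (of_nat n) = real n"
  by (induction n) (simp_all add: f_0 f_1 f_add)
lemma f_pow: "f (a ^ n) = f a ^ n"
  by (induction n) (simp_all add: f_1 f_mult)
lemma f_pos: assumes z: "z \<noteq> 0" shows "f z > 0"
proof -
  obtain l where l: "ge (of_nat l * z) 1" using ge_arch[OF z] by blast
  have "real l * f z \<ge> 1" using f_mono[OF l] by (simp add: f_mult f_nat f_1)
  then show ?thesis using f_nonneg[of z] by (cases "f z = 0") auto
qed
end

end


context strassen begin

lemma of_nat_nz: "k > 0 \<Longrightarrow> (of_nat k :: 'a) \<noteq> 0"
proof
  assume k: "k > 0" and "(of_nat k :: 'a) = 0"
  then have "ge (of_nat 0) (of_nat k)" using ge_refl[of "0::'a"] by simp
  then show False using k ge_nat[of 0 k] by simp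
qed

lemma pow_nz: "(x::'a) \<noteq> 0 \<Longrightarrow> x ^ n \<noteq> 0"
  by (induction n) (simp_all add: nz_mult)

lemma p12:
  assumes P1: "\<forall>f. mono_hom_Rplus ge f \<longrightarrow> f x \<ge> f y" and e: "\<epsilon> > 0"
  shows "\<exists>m n :: nat. \<exists>z. m > 0 \<and> n > 0 \<and> z \<noteq> 0 \<and> real m \<le> \<epsilon> * real n \<and>
                 ge (of_nat n * z * x + of_nat m * z) (of_nat n * z * y)"
proof -
  obtain n :: nat where n: "2 / \<epsilon> < real n" using reals_Archimedean2 by blast
  have en: "2 < \<epsilon> * real n" using n e by (simp add: field_simps)
  then have n0: "n > 0" using e by (cases n) auto
  define X where "X = of_nat n * x + 1"
  define Y where "Y = of_nat n * y"
  have "\<forall>f. mono_hom_Rplus ge f \<longrightarrow> f Y < f X"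
  proof (intro allI impI)
    fix f assume F: "mono_hom_Rplus ge f"
    have "real n * f y \<le> real n * f x" using P1 F by (simp add: mult_left_mono)
    then show "f Y < f X" unfolding X_def Y_def by (simp add: f_add[OF F] f_mult[OF F] f_nat[OF F] f_1[OF F])
  qed
  from core[OF this] obtain z w where z: "z \<noteq> 0" and E: "ge (z*X + w) (z*Y + w)" by blast
  obtain L where L: "\<forall>k::nat. ge (of_nat k * z * X + of_nat L * z) (of_nat k * z * Y)"
    using decat[OF z E] by blast
  define k where "k = L + 1"
  have "ge (of_nat k * z * X + of_nat L * z) (of_nat k * z * Y)" using L by blast
  moreover have "of_nat k * z * X + of_nat L * z = of_nat (k*n) * z * x + of_nat (k + L) * z"
    "of_nat k * z * Y = of_nat (k*n) * z * y"
    unfolding X_def Y_def by (simp_all add: algebra_simps)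
  ultimately have G: "ge (of_nat (k*n) * z * x + of_nat (k + L) * z) (of_nat (k*n) * z * y)" by simp
  have "real (k + L) \<le> 2 * real k" unfolding k_def by simp
  also have "\<dots> \<le> (\<epsilon> * real n) * real k" using en by (intro mult_right_mono) auto
  also have "\<dots> = \<epsilon> * real (k * n)" by simp
  finally have R: "real (k + L) \<le> \<epsilon> * real (k * n)" .
  have "k + L > 0" "k * n > 0" using n0 unfolding k_def by auto
  then show ?thesis using G R z by blast
qed

lemma p23:
  assumes x0: "x \<noteq> 0"
    and P2: "\<forall>\<epsilon>::real. \<epsilon> > 0 \<longrightarrow>
              (\<exists>m n :: nat. \<exists>z. m > 0 \<and> n > 0 \<and> z \<noteq> 0 \<and>
                 real m \<le> \<epsilon> * real n \<and>
                 ge (of_nat n * z * x + of_nat m * z) (of_nat n * z * y))"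
    and e: "\<epsilon> > 0"
  shows "\<exists>m n :: nat. \<exists>z. m > 0 \<and> n > 0 \<and> z \<noteq> 0 \<and>
                 real m / real n \<le> 1 + \<epsilon> \<and>
                 ge (of_nat m * z * x) (of_nat n * z * y)"
proof -
  obtain lx where lx: "ge (of_nat lx * x) 1" using ge_arch[OF x0] by blast
  have lx0: "lx > 0"
  proof (rule ccontr)
    assume "\<not> lx > 0" then have "ge (of_nat 0) (of_nat 1)" using lx by simp
    then show False using ge_nat[of 0 1] by simp
  qed
  have "\<epsilon> / real lx > 0" using e lx0 by simp
  then obtain m n z where m: "m > 0" and n: "n > 0" and z: "z \<noteq> 0" and mn: "real m \<le> \<epsilon> / real lx * real n"
    and E: "ge (of_nat n * z * x + of_nat m * z) (of_nat n * z * y)"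
    using P2 by blast
  have "ge (of_nat m * z * (of_nat lx * x)) (of_nat m * z * 1)" using ge_multL[OF lx] .
  then have "ge (of_nat n * z * x + of_nat m * z * (of_nat lx * x)) (of_nat n * z * x + of_nat m * z * 1)"
    by (rule ge_addL)
  then have "ge (of_nat (n + m * lx) * z * x) (of_nat n * z * x + of_nat m * z)"
    by (simp add: algebra_simps)
  then have G: "ge (of_nat (n + m * lx) * z * x) (of_nat n * z * y)" using ge_trans[OF _ E] by blast
  have "real m * real lx \<le> \<epsilon> * real n" using mn lx0 by (simp add: field_simps)
  then have "real (n + m * lx) \<le> (1 + \<epsilon>) * real n" by (simp add: algebra_simps)
  then have R: "real (n + m * lx) / real n \<le> 1 + \<epsilon>" using n by (simp add: divide_le_eq)
  have "n + m * lx > 0" using n by simp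
  then show ?thesis using G R n z by blast
qed

lemma mult_cat:
  assumes z: "z \<noteq> 0" and E: "ge (z * A) (z * B)"
  shows "\<exists>C::nat. \<forall>j. ge (of_nat C * A^j) (B^j)"
proof -
  have it: "ge (z * A^j) (z * B^j)" for j
  proof (induction j)
    case 0 then show ?case by (simp add: ge_refl)
  next
    case (Suc j)
    have a: "ge (z * A^j * A) (z * B^j * A)" using ge_mult[OF Suc] .
    have b: "ge (B^j * (z * A)) (B^j * (z * B))" using ge_multL[OF E] .
    have "ge (z * A^j * A) (B^j * (z * B))" using ge_trans[OF a] b by (simp add: algebra_simps)
    then show ?case by (simp add: algebra_simps)
  qed
  obtain l1 where l1: "ge (of_nat l1 * z) 1" using ge_arch[OF z] by blast
  obtain l2 where l2: "ge (of_nat l2) z" using ge_arch[OF z] by blast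
  have "ge (of_nat (l1 * l2) * A^j) (B^j)" for j
  proof -
    have a: "ge (of_nat l1 * z * B^j) (1 * B^j)" using ge_mult[OF l1] .
    have b: "ge (of_nat l1 * (z * A^j)) (of_nat l1 * (z * B^j))" using ge_multL[OF it] .
    have c: "ge (of_nat l1 * (of_nat l2 * A^j)) (of_nat l1 * (z * A^j))" using ge_multL[OF ge_mult[OF l2]] .
    have "ge (of_nat l1 * (of_nat l2 * A^j)) (of_nat l1 * z * B^j)"
      using ge_trans[OF c b] by (simp add: algebra_simps)
    then have "ge (of_nat l1 * (of_nat l2 * A^j)) (B^j)" using ge_trans[OF _ a] by simp
    then show ?thesis by (simp add: algebra_simps)
  qed
  then show ?thesis by blast
qed


lemma p14:
  assumes x0: "x \<noteq> 0" and P1: "\<forall>f. mono_hom_Rplus ge f \<longrightarrow> f x \<ge> f y" and e: "\<epsilon> > 0"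
  shows "\<exists>k n :: nat. k > 0 \<and> n > 0 \<and> real k \<le> \<epsilon> * real n \<and> ge ((2::'a) ^ k * x ^ n) (y ^ n)"
proof -
  obtain N :: nat where N: "3 / \<epsilon> < real N" using reals_Archimedean2 by blast
  have eN: "3 < \<epsilon> * real N" using N e by (simp add: field_simps)
  then have N0: "N > 0" using e by (cases N) auto
  define X where "X = 3 * x ^ N"
  define Y where "Y = y ^ N"
  have "\<forall>f. mono_hom_Rplus ge f \<longrightarrow> f Y < f X"
  proof (intro allI impI)
    fix f assume F: "mono_hom_Rplus ge f"
    have f3: "f 3 = 3" using f_nat[OF F, of 3] by simp
    have "f y ^ N \<le> f x ^ N" using P1 F f_nonneg[OF F, of y] by (simp add: power_mono)
    moreover have "f x ^ N > 0" using f_pos[OF F x0] by simp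
    ultimately show "f Y < f X" unfolding X_def Y_def by (simp add: f_mult[OF F] f_pow[OF F] f3)
  qed
  from core[OF this] obtain z w where z: "z \<noteq> 0" and E: "ge (z*X + w) (z*Y + w)" by blast
  obtain L where L: "\<forall>k::nat. ge (of_nat k * z * X + of_nat L * z) (of_nat k * z * Y)"
    using decat[OF z E] by blast
  have xN: "x ^ N \<noteq> 0" using pow_nz[OF x0] .
  obtain lx where lx: "ge (of_nat lx * x ^ N) 1" using ge_arch[OF xN] by blast
  define k where "k = L * lx + 1"
  have E1: "ge (of_nat k * z * X + of_nat L * z) (of_nat k * z * Y)" using L by blast
  have a1: "ge (of_nat L * z * (of_nat lx * x ^ N)) (of_nat L * z * 1)" using ge_multL[OF lx] .
  have a2: "ge (of_nat k * (z * x ^ N)) (of_nat (L * lx) * (z * x ^ N))"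
  proof -
    have "ge (of_nat k) (of_nat (L * lx))" using ge_nat[of k "L * lx"] unfolding k_def by simp
    then show ?thesis by (rule ge_mult)
  qed
  have a: "ge (of_nat k * (z * x ^ N)) (of_nat L * z)"
    using ge_trans[OF a2] a1 by (simp add: algebra_simps)
  have "ge (of_nat k * z * X + of_nat k * (z * x ^ N)) (of_nat k * z * X + of_nat L * z)"
    using ge_addL[OF a] .
  then have b: "ge (of_nat k * z * X + of_nat k * (z * x ^ N)) (of_nat k * z * Y)"
    using ge_trans[OF _ E1] by blast
  have k0: "k > 0" unfolding k_def by simp
  define z' where "z' = of_nat k * z"
  have z': "z' \<noteq> 0" unfolding z'_def using nz_mult[OF of_nat_nz[OF k0] z] .
  have c4: "ge (of_nat k * z * X + of_nat k * (z * x ^ N)) (of_nat k * z * (3 * x^N) + of_nat k * (z * x ^ N))"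
    unfolding X_def by (simp add: ge_refl)
  have e4: "(4::'a) * x ^ N = 3 * x ^ N + x ^ N"
  proof -
    have "(3 + 1) * x ^ N = 3 * x ^ N + (x ^ N :: 'a)" by (simp only: distrib_right mult_1_left)
    moreover have "(3 + 1 :: 'a) = 4" by simp
    ultimately show ?thesis by simp
  qed
  have "z' * (4 * x ^ N) = of_nat k * z * (3 * x^N) + of_nat k * (z * x ^ N)"
    unfolding e4 z'_def by (simp add: algebra_simps)
  then have "ge (z' * (4 * x ^ N)) (of_nat k * z * (3 * x^N) + of_nat k * (z * x ^ N))"
    by (simp add: ge_refl)
  moreover have b': "ge (of_nat k * z * (3 * x^N) + of_nat k * (z * x ^ N)) (of_nat k * z * Y)"
    using b unfolding X_def .
  ultimately have "ge (z' * (4 * x ^ N)) (z' * y ^ N)"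
    using ge_trans unfolding z'_def Y_def by blast
  from mult_cat[OF z' this] obtain C where C: "\<forall>j. ge (of_nat C * (4 * x ^ N)^j) ((y ^ N)^j)" by blast
  define j where "j = C + 1"
  have G1: "ge (of_nat C * (4 * x ^ N)^j) ((y ^ N)^j)" using C by blast
  have eq1: "of_nat C * (4 * x ^ N)^j = of_nat (C * 4^j) * x ^ (N * j)"
    by (simp add: power_mult_distrib power_mult mult.assoc)
  have eq2: "(y ^ N)^j = y ^ (N * j)" by (simp add: power_mult)
  have "C * 4^j \<le> 2^(C + 2*j)"
  proof -
    have "C \<le> 2^C" by (simp add: less_imp_le less_exp)
    moreover have "(4::nat)^j = 2^(2*j)" by (simp add: power_mult)
    ultimately show ?thesis by (simp add: power_add)
  qed
  then have "ge (of_nat (2^(C + 2*j)) * x ^ (N * j)) (of_nat (C * 4^j) * x ^ (N * j))"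
    using ge_mult ge_nat by blast
  then have G: "ge ((2::'a)^(C + 2*j) * x ^ (N * j)) (y ^ (N * j))"
    using ge_trans[OF _ G1] eq1 eq2 by simp
  have "real (C + 2*j) \<le> 3 * real j" unfolding j_def by simp
  also have "\<dots> \<le> (\<epsilon> * real N) * real j" using eN by (intro mult_right_mono) auto
  also have "\<dots> = \<epsilon> * real (N * j)" by simp
  finally have R: "real (C + 2*j) \<le> \<epsilon> * real (N * j)" .
  have "C + 2*j > 0" "N * j > 0" using N0 unfolding j_def by auto
  then show ?thesis using G R by blast
qed

lemma p21:
  assumes P2: "\<forall>\<epsilon>::real. \<epsilon> > 0 \<longrightarrow>
              (\<exists>m n :: nat. \<exists>z. m > 0 \<and> n > 0 \<and> z \<noteq> 0 \<and>
                 real m \<le> \<epsilon> * real n \<and>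
                 ge (of_nat n * z * x + of_nat m * z) (of_nat n * z * y))"
    and F: "mono_hom_Rplus ge f"
  shows "f x \<ge> f y"
proof (rule field_le_epsilon)
  fix e :: real assume e: "e > 0"
  then obtain m n z where m: "m > 0" and n: "n > 0" and z: "z \<noteq> 0" and mn: "real m \<le> e * real n"
    and E: "ge (of_nat n * z * x + of_nat m * z) (of_nat n * z * y)"
    using P2 by blast
  have fz: "f z > 0" using f_pos[OF F z] .
  have "f z * (real n * f y) \<le> f z * (real n * f x + real m)"
    using f_mono[OF F E] by (simp add: f_add[OF F] f_mult[OF F] f_nat[OF F] algebra_simps)
  then have "real n * f y \<le> real n * f x + real m" using fz by simp
  also have "\<dots> \<le> real n * f x + e * real n" using mn by simp
  finally have "real n * f y \<le> real n * (f x + e)" by (simp add: algebra_simps)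
  then show "f y \<le> f x + e" using n by simp
qed

lemma p31:
  assumes P3: "\<forall>\<epsilon>::real. \<epsilon> > 0 \<longrightarrow>
              (\<exists>m n :: nat. \<exists>z. m > 0 \<and> n > 0 \<and> z \<noteq> 0 \<and>
                 real m / real n \<le> 1 + \<epsilon> \<and>
                 ge (of_nat m * z * x) (of_nat n * z * y))"
    and F: "mono_hom_Rplus ge f"
  shows "f x \<ge> f y"
proof (rule field_le_epsilon)
  fix e :: real assume e: "e > 0"
  have fx: "f x \<ge> 0" using f_nonneg[OF F] .
  define d where "d = e / (f x + 1)"
  have d: "d > 0" unfolding d_def using e fx by simp
  have dfx: "d * f x \<le> e"
  proof -
    have "d * f x \<le> d * (f x + 1)" using d by simp
    also have "\<dots> = e" unfolding d_def using fx by simp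
    finally show ?thesis .
  qed
  obtain m n z where m: "m > 0" and n: "n > 0" and z: "z \<noteq> 0" and mn: "real m / real n \<le> 1 + d"
    and E: "ge (of_nat m * z * x) (of_nat n * z * y)"
    using P3 d by blast
  have fz: "f z > 0" using f_pos[OF F z] .
  have "f z * (real n * f y) \<le> f z * (real m * f x)"
    using f_mono[OF F E] by (simp add: f_mult[OF F] f_nat[OF F] algebra_simps)
  then have "real n * f y \<le> real m * f x" using fz by simp
  also have "\<dots> \<le> ((1 + d) * real n) * f x"
  proof (rule mult_right_mono)
    show "real m \<le> (1 + d) * real n" using mn n by (simp add: divide_le_eq)
  qed (rule fx)
  finally have "real n * f y \<le> real n * ((1 + d) * f x)" by (simp add: algebra_simps)
  then have "f y \<le> (1 + d) * f x" using n by simp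
  then show "f y \<le> f x + e" using dfx by (simp add: algebra_simps)
qed

lemma p41:
  assumes x0: "x \<noteq> 0"
    and P4: "\<forall>\<epsilon>::real. \<epsilon> > 0 \<longrightarrow>
              (\<exists>k n :: nat. k > 0 \<and> n > 0 \<and>
                 real k \<le> \<epsilon> * real n \<and>
                 ge ((2::'a) ^ k * x ^ n) (y ^ n))"
    and F: "mono_hom_Rplus ge f"
  shows "f x \<ge> f y"
proof (rule ccontr)
  assume "\<not> f x \<ge> f y"
  then have lt: "f x < f y" by simp
  have fx: "f x > 0" using f_pos[OF F x0] .
  define r where "r = f y / f x"
  have r1: "r > 1" unfolding r_def using lt fx by simp
  have fy: "f y = r * f x" unfolding r_def using fx by simp
  obtain M :: nat where M: "1 / (r - 1) < real M" using reals_Archimedean2 by blast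
  have Mr: "1 < real M * (r - 1)" using M r1 by (simp add: field_simps)
  then have M0: "M > 0" using r1 by (cases M) auto
  have "1 / real M > 0" using M0 by simp
  then obtain k n where k: "k > 0" and n: "n > 0" and kn: "real k \<le> 1 / real M * real n"
    and E: "ge ((2::'a) ^ k * x ^ n) (y ^ n)"
    using P4 by blast
  have kM: "k * M \<le> n"
  proof -
    have "real k * real M \<le> real n" using kn M0 by (simp add: field_simps)
    then show ?thesis by (metis of_nat_le_iff of_nat_mult)
  qed
  have "f (y ^ n) \<le> f ((2::'a) ^ k * x ^ n)" using f_mono[OF F E] .
  then have "(r * f x) ^ n \<le> 2 ^ k * f x ^ n"
    using fy by (simp add: f_mult[OF F] f_pow[OF F] f_nat[OF F, of 2, simplified])
  then have "r ^ n * f x ^ n \<le> 2 ^ k * f x ^ n" by (simp add: power_mult_distrib)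
  moreover have "f x ^ n > 0" using fx by simp
  ultimately have rn: "r ^ n \<le> 2 ^ k" by simp
  have "(r ^ n) ^ M \<le> (2 ^ k) ^ M" using rn r1 by (intro power_mono) auto
  also have "\<dots> = (2::real) ^ (k * M)" by (simp add: power_mult)
  also have "\<dots> \<le> 2 ^ n" using kM by (intro power_increasing) auto
  finally have A: "(r ^ M) ^ n \<le> 2 ^ n" by (simp add: power_mult[symmetric] mult.commute)
  have "1 + real M * (r - 1) \<le> (1 + (r - 1)) ^ M" using r1 by (intro Bernoulli_inequality) simp
  then have "2 < r ^ M" using Mr by simp
  then have "(2::real) ^ n < (r ^ M) ^ n" using n by (intro power_strict_mono) auto
  then show False using A by simp
qed

end

theorem corollary2p18:
  fixes ge :: "'a::comm_semiring_1 \<Rightarrow> 'a \<Rightarrow> bool" and x y :: 'a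
  assumes S: "strassen_preordered ge"
    and x0: "x \<noteq> 0" and y0: "y \<noteq> 0"
  defines "P1 \<equiv> (\<forall>f. mono_hom_Rplus ge f \<longrightarrow> f x \<ge> f y)"
    and "P2 \<equiv> (\<forall>\<epsilon>::real. \<epsilon> > 0 \<longrightarrow>
              (\<exists>m n :: nat. \<exists>z. m > 0 \<and> n > 0 \<and> z \<noteq> 0 \<and>
                 real m \<le> \<epsilon> * real n \<and>
                 ge (of_nat n * z * x + of_nat m * z) (of_nat n * z * y)))"
    and "P3 \<equiv> (\<forall>\<epsilon>::real. \<epsilon> > 0 \<longrightarrow>
              (\<exists>m n :: nat. \<exists>z. m > 0 \<and> n > 0 \<and> z \<noteq> 0 \<and>
                 real m / real n \<le> 1 + \<epsilon> \<and>
                 ge (of_nat m * z * x) (of_nat n * z * y)))"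
    and "P4 \<equiv> (\<forall>\<epsilon>::real. \<epsilon> > 0 \<longrightarrow>
              (\<exists>k n :: nat. k > 0 \<and> n > 0 \<and>
                 real k \<le> \<epsilon> * real n \<and>
                 ge ((2::'a) ^ k * x ^ n) (y ^ n)))"
  shows "(P1 \<longleftrightarrow> P2) \<and> (P1 \<longleftrightarrow> P3) \<and> (P1 \<longleftrightarrow> P4) \<and>
         ((\<forall>f. mono_hom_Rplus ge f \<longrightarrow> f x > f y) \<longrightarrow>
            (\<exists>z w. z \<noteq> 0 \<and> w \<noteq> 0 \<and> ge (z * x + w) (z * y + w)))"
proof -
  interpret strassen ge by (rule strassen.intro) (rule S)
  have h12: "P2" if H: "P1"
    unfolding P2_def
  proof (intro allI impI)
    fix e :: real assume "e > 0"
    then show "\<exists>m n :: nat. \<exists>z. m > 0 \<and> n > 0 \<and> z \<noteq> 0 \<and>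
                 real m \<le> e * real n \<and>
                 ge (of_nat n * z * x + of_nat m * z) (of_nat n * z * y)"
      by (rule p12[OF H[unfolded P1_def]])
  qed
  have h21: "P1" if H: "P2"
    unfolding P1_def
  proof (intro allI impI)
    fix f assume "mono_hom_Rplus ge f"
    then show "f y \<le> f x" by (rule p21[OF H[unfolded P2_def]])
  qed
  have h23: "P3" if H: "P2"
    unfolding P3_def
  proof (intro allI impI)
    fix e :: real assume "e > 0"
    then show "\<exists>m n :: nat. \<exists>z. m > 0 \<and> n > 0 \<and> z \<noteq> 0 \<and>
                 real m / real n \<le> 1 + e \<and>
                 ge (of_nat m * z * x) (of_nat n * z * y)"
      by (rule p23[OF x0 H[unfolded P2_def]])
  qed
  have h31: "P1" if H: "P3"
    unfolding P1_def
  proof (intro allI impI)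
    fix f assume "mono_hom_Rplus ge f"
    then show "f y \<le> f x" by (rule p31[OF H[unfolded P3_def]])
  qed
  have h14: "P4" if H: "P1"
    unfolding P4_def
  proof (intro allI impI)
    fix e :: real assume "e > 0"
    then show "\<exists>k n :: nat. k > 0 \<and> n > 0 \<and>
                 real k \<le> e * real n \<and>
                 ge ((2::'a) ^ k * x ^ n) (y ^ n)"
      by (rule p14[OF x0 H[unfolded P1_def]])
  qed
  have h41: "P1" if H: "P4"
    unfolding P1_def
  proof (intro allI impI)
    fix f assume "mono_hom_Rplus ge f"
    then show "f y \<le> f x" by (rule p41[OF x0 H[unfolded P4_def]])
  qed
  have hm: "\<exists>z w. z \<noteq> 0 \<and> w \<noteq> 0 \<and> ge (z * x + w) (z * y + w)"
    if H: "\<forall>f. mono_hom_Rplus ge f \<longrightarrow> f x > f y"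
    by (rule core[OF H])
  have e1: "P1 \<longleftrightarrow> P2" using h12 h21 by (intro iffI)
  have e2: "P1 \<longleftrightarrow> P3" using h12 h23 h31 by blast
  have e3: "P1 \<longleftrightarrow> P4" using h14 h41 by (intro iffI)
  show ?thesis using e1 e2 e3 hm by (intro conjI impI)
qed

end
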